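(* $\mathsf{SetEquality}\in\mathsf{dAM}[O(\log n)]$. Here, for a fixed constant $c\in\mathbb N$, in $\mathsf{SetEquality}$ each node $u$ of the $n$-node communication graph holds two lists $a_{u,1},\dots,a_{u,\ell}$ and $b_{u,1},\dots,b_{u,\ell}$ with $\ell\le n$ and all $a_{u,i},b_{u,i}\in\{0,1\}^{c\log n}$; the instance is in the language iff the multisets $\mathcal A=\{a_{u,i}:u\in V,i\in[\ell]\}$ and $\mathcal B=\{b_{u,i}:u\in V,i\in[\ell]\}$ are equal (as multisets).
   Context: Distributed interactive proofs (model). An instance consists of a connected communication graph $G=(V,E)$ with $|V|=n$, where each node has a unique identifier of $O(\log n)$ bits, knows $n$, knows its own identifier, its local input (if the problem has local inputs), and the identifiers of its neighbours (with an arbitrary port numbering of its incident edges). A prover, who sees the whole instance, interacts with all nodes in $r$ alternating messages. In a verifier (node) message each node independently samples fresh uniformly random bits and sends them to the prover (public coins). In a prover message the prover sends each node a string. Nodes may additionally exchange the strings they received from the prover with their neighbours in $G$. At the end each node deterministically accepts or rejects as a function of its local information, its own random bits, the strings it received from the prover and those its neighbours received; the instance is accepted iff all nodes accept. The proof size is the maximum number of bits in any single message between the prover and any node. A language $\mathcal L$ (set of instances) is in $\mathsf{dIP}[r,\ell]$ if there is an $r$-message protocol of proof size $\ell=\ell(n)$ such that (completeness) for every instance in $\mathcal L$ some prover makes all nodes accept with probability $>2/3$, and (soundness) for every instance not in $\mathcal L$ and every prover, all nodes accept with probability $<1/3$ (probabilities over the nodes' coins). $\mathsf{dAM}[\ell]$,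 $\mathsf{dMAM}[\ell]$, $\mathsf{dAMAM}[\ell]$, $\mathsf{dMAMAM}[\ell]$ denote the cases of 2, 3, 4, 5 messages, where the letters indicate who sends each message in order (A = nodes send random coins, M = prover). *)

theory Defs
  imports Complex_Main "HOL-Library.Multiset" "HOL-Library.FuncSet"
begin

text \<open>
Vertices are identified with their unique identifiers (natural numbers).
An instance is a triple (V, E, x): a finite vertex set V of size n whose
identifiers lie in {0..<n^kappa} (i.e. O(log n) bits), a symmetric irreflexive
edge relation E on V making the graph connected, and local inputs x.
\<close>

type_synonym 'i inst = "nat set \<times> (nat \<Rightarrow> nat \<Rightarrow> bool) \<times> (nat \<Rightarrow> 'i)"

definition clog :: "nat \<Rightarrow> nat" where
  "clog n = nat \<lceil>log 2 (real n)\<rceil>"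

definition wf_graph :: "nat \<Rightarrow> nat set \<Rightarrow> (nat \<Rightarrow> nat \<Rightarrow> bool) \<Rightarrow> bool" where
  "wf_graph \<kappa> V E \<longleftrightarrow>
     finite V \<and> V \<noteq> {} \<and> V \<subseteq> {..< card V ^ \<kappa>} \<and>
     (\<forall>u w. E u w \<longrightarrow> u \<in> V \<and> w \<in> V) \<and>
     (\<forall>u w. E u w \<longrightarrow> E w u) \<and> (\<forall>u. \<not> E u u) \<and>
     (\<forall>u\<in>V. \<forall>w\<in>V. E\<^sup>*\<^sup>* u w)"

definition coins :: "nat set \<Rightarrow> nat \<Rightarrow> (nat \<Rightarrow> bool list) set" where
  "coins V k = PiE V (\<lambda>_. {cs. length cs = k})"

text \<open>A decision function: n, own id, own input, own coins, own prover string,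
  partial map from neighbour ids to the strings they received from the prover.\<close>
type_synonym 'i decider =
  "nat \<Rightarrow> nat \<Rightarrow> 'i \<Rightarrow> bool list \<Rightarrow> bool list \<Rightarrow> (nat \<Rightarrow> bool list option) \<Rightarrow> bool"

text \<open>A prover: maps the nodes' coins to the strings sent to each node.
  (The prover sees the whole instance; it is chosen per instance.)\<close>
type_synonym prover = "(nat \<Rightarrow> bool list) \<Rightarrow> nat \<Rightarrow> bool list"

definition all_accept ::
  "nat set \<Rightarrow> (nat \<Rightarrow> nat \<Rightarrow> bool) \<Rightarrow> (nat \<Rightarrow> 'i) \<Rightarrow> 'i decider \<Rightarrow> prover
     \<Rightarrow> (nat \<Rightarrow> bool list) \<Rightarrow> bool" where
  "all_accept V E x D P \<rho> \<longleftrightarrow>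
     (\<forall>u\<in>V. D (card V) u (x u) (\<rho> u) (P \<rho> u)
               (\<lambda>w. if w \<in> V \<and> E u w then Some (P \<rho> w) else None))"

definition acc_prob ::
  "nat set \<Rightarrow> (nat \<Rightarrow> nat \<Rightarrow> bool) \<Rightarrow> (nat \<Rightarrow> 'i) \<Rightarrow> (nat \<Rightarrow> nat) \<Rightarrow> 'i decider
     \<Rightarrow> prover \<Rightarrow> real" where
  "acc_prob V E x r D P =
     real (card {\<rho> \<in> coins V (r (card V)). all_accept V E x D P \<rho>})
       / real (card (coins V (r (card V))))"

definition prover_size_ok :: "nat set \<Rightarrow> (nat \<Rightarrow> nat) \<Rightarrow> (nat \<Rightarrow> nat) \<Rightarrow> prover \<Rightarrow> bool" where
  "prover_size_ok V r L P \<longleftrightarrow>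
     (\<forall>\<rho>\<in>coins V (r (card V)). \<forall>u\<in>V. length (P \<rho> u) \<le> L (card V))"

definition in_dAM :: "'i inst set \<Rightarrow> 'i inst set \<Rightarrow> (nat \<Rightarrow> nat) \<Rightarrow> bool" where
  "in_dAM Dom Lang L \<longleftrightarrow>
     (\<exists>(r :: nat \<Rightarrow> nat) (D :: 'i decider).
        (\<forall>n. r n \<le> L n) \<and>
        (\<forall>(V, E, x) \<in> Lang. \<exists>P. prover_size_ok V r L P \<and> acc_prob V E x r D P > 2/3) \<and>
        (\<forall>(V, E, x) \<in> Dom - Lang. \<forall>P. prover_size_ok V r L P \<longrightarrow> acc_prob V E x r D P < 1/3))"

definition seteq_dom :: "nat \<Rightarrow> nat \<Rightarrow> (bool list list \<times> bool list list) inst set" where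
  "seteq_dom c \<kappa> = {(V, E, x). wf_graph \<kappa> V E \<and>
     (\<exists>l \<le> card V. \<forall>u\<in>V. length (fst (x u)) = l \<and> length (snd (x u)) = l \<and>
        (\<forall>s \<in> set (fst (x u)) \<union> set (snd (x u)). length s = c * clog (card V)))}"

definition seteq_lang :: "nat \<Rightarrow> nat \<Rightarrow> (bool list list \<times> bool list list) inst set" where
  "seteq_lang c \<kappa> = {(V, E, x) \<in> seteq_dom c \<kappa>.
     (\<Sum>u\<in>V. mset (fst (x u))) = (\<Sum>u\<in>V. mset (snd (x u)))}"

end

theory Submission
  imports Defs "HOL-Number_Theory.Number_Theory"
begin

lemma div_Suc_split: "0 < (q::nat) \<Longrightarrow> Suc n div q = n div q + (if q dvd Suc n then 1 else 0)"
  by (simp add: div_Suc dvd_eq_mod_eq_0)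

lemma pow_gt_self: "2 \<le> (p::nat) \<Longrightarrow> n < p ^ n"
proof (induction n)
  case 0 then show ?case by simp
next
  case (Suc n)
  then have "Suc n \<le> p ^ n" by simp
  also have "\<dots> < p ^ Suc n" using Suc.prems by (simp add: power_strict_increasing_iff)
  finally show ?case .
qed

lemma mult_count:
  assumes p: "prime (p::nat)" and x: "x \<noteq> 0" and v: "multiplicity p x \<le> N"
  shows "card {i\<in>{1..N}. p ^ i dvd x} = multiplicity p x"
proof -
  have "{i\<in>{1..N}. p ^ i dvd x} = {1..multiplicity p x}"
  proof -
    have "is_unit p = False" using p not_prime_unit by blast
    then have "\<And>i. p ^ i dvd x \<longleftrightarrow> i \<le> multiplicity p x"
      using power_dvd_iff_le_multiplicity[OF x, of p] by simp
    then show ?thesis using v by fastforce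
  qed
  then show ?thesis by simp
qed

lemma legendre:
  assumes p: "prime (p::nat)"
  shows "multiplicity p (fact n) = (\<Sum>i\<in>{1..n}. n div p ^ i)"
proof (induction n)
  case 0 then show ?case by simp
next
  case (Suc n)
  have p2: "2 \<le> p" using p prime_ge_2_nat by blast
  have "multiplicity p (fact (Suc n) :: nat) = multiplicity p (Suc n) + multiplicity p (fact n :: nat)"
  proof -
    have "(fact (Suc n) :: nat) = Suc n * fact n" by simp
    then show ?thesis using prime_elem_multiplicity_mult_distrib[of p "Suc n" "fact n"] p
      by (simp del: fact_Suc)
  qed
  moreover have "multiplicity p (Suc n) \<le> Suc n"
  proof -
    have "p ^ multiplicity p (Suc n) dvd Suc n" by (rule multiplicity_dvd)
    then have "p ^ multiplicity p (Suc n) \<le> Suc n" by (rule dvd_imp_le) simp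
    with pow_gt_self[OF p2, of "multiplicity p (Suc n)"] show ?thesis by linarith
  qed
  ultimately have m: "multiplicity p (fact (Suc n) :: nat) = card {i\<in>{1..Suc n}. p ^ i dvd Suc n} + (\<Sum>i\<in>{1..n}. n div p ^ i)"
    using mult_count[OF p, of "Suc n" "Suc n"] Suc.IH by simp
  have e1: "(\<Sum>i\<in>{1..Suc n}. Suc n div p ^ i) = (\<Sum>i\<in>{1..Suc n}. n div p ^ i + (if p ^ i dvd Suc n then 1 else 0))"
    using p2 by (intro sum.cong refl div_Suc_split) simp
  have e2: "(\<Sum>i\<in>{1..Suc n}. n div p ^ i + (if p ^ i dvd Suc n then 1 else 0)) = (\<Sum>i\<in>{1..Suc n}. n div p ^ i) + (\<Sum>i\<in>{1..Suc n}. (if p ^ i dvd Suc n then 1 else 0))"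
    by (rule sum.distrib)
  have e3: "(\<Sum>i\<in>{1..Suc n}. (if p ^ i dvd Suc n then 1 else 0)) = card {i\<in>{1..Suc n}. p ^ i dvd Suc n}"
    using sum.inter_filter[of "{1..Suc n}" "\<lambda>_. 1::nat" "\<lambda>i. p ^ i dvd Suc n"] by simp
  have e4: "(\<Sum>i\<in>{1..Suc n}. n div p ^ i) = (\<Sum>i\<in>{1..n}. n div p ^ i)"
  proof -
    have "n < p ^ Suc n" using pow_gt_self[OF p2, of "Suc n"] by simp
    then have "n div p ^ Suc n = 0" by (rule div_less)
    then show ?thesis by (simp only: sum.cl_ivl_Suc) simp
  qed
  show ?case using m e1 e2 e3 e4 by (simp only:)
qed

lemma nat_4pow_le: "0 < n \<Longrightarrow> 4 ^ n \<le> ((2*n) choose n) * (2*n)"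
proof -
  assume n: "0 < n"
  have "4^n / (2*real n) \<le> real ((2*n) choose n)" by (rule central_binomial_lower_bound[OF n])
  then have "real (4^n) \<le> real ((2*n) choose n) * (2 * real n)" using n by (simp add: field_simps)
  then have "real (4^n) \<le> real (((2*n) choose n) * (2*n))" by simp
  then show ?thesis by (simp only: of_nat_le_iff)
qed

lemma sum_extend_zero:
  fixes m N :: nat
  assumes "m \<le> N" "\<And>i. m < i \<Longrightarrow> f i = (0::nat)"
  shows "(\<Sum>i\<in>{1..N}. f i) = (\<Sum>i\<in>{1..m}. f i)"
proof (rule sum.mono_neutral_right)
  show "\<forall>i\<in>{1..N} - {1..m}. f i = 0"
  proof
    fix i assume "i \<in> {1..N} - {1..m}"
    then have "m < i" by auto
    then show "f i = 0" by (rule assms(2))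
  qed
qed (use assms(1) in auto)

lemma binom_mult_bound:
  assumes p: "prime (p::nat)" and m: "0 < m"
  shows "p ^ multiplicity p ((2*m) choose m) \<le> 2*m"
proof (rule ccontr)
  define B where "B = (2*m) choose m"
  define v where "v = multiplicity p B"
  assume "\<not> p ^ multiplicity p ((2*m) choose m) \<le> 2*m"
  then have big: "2*m < p ^ v" unfolding v_def B_def by simp
  have p2: "2 \<le> p" using p prime_ge_2_nat by blast
  have B0: "B \<noteq> 0" unfolding B_def by simp
  have "fact m * fact (2*m - m) * B = (fact (2*m) :: nat)"
    unfolding B_def by (rule binomial_fact_lemma) simp
  then have fe: "(fact (2*m) :: nat) = B * (fact m * fact m)" by (simp add: algebra_simps)
  have fnz: "(fact m :: nat) \<noteq> 0" by simp
  have "multiplicity p (fact (2*m) :: nat) = v + (multiplicity p (fact m :: nat) + multiplicity p (fact m :: nat))"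
    unfolding fe v_def using p B0 fnz
    by (simp add: prime_elem_multiplicity_mult_distrib)
  then have veq: "(\<Sum>i\<in>{1..2*m}. 2*m div p ^ i) = v + 2 * (\<Sum>i\<in>{1..m}. m div p ^ i)"
    using legendre[OF p, of "2*m"] legendre[OF p, of m] by simp
  have ext: "(\<Sum>i\<in>{1..2*m}. m div p ^ i) = (\<Sum>i\<in>{1..m}. m div p ^ i)"
  proof (rule sum_extend_zero)
    fix i assume "m < i"
    have "i < p ^ i" by (rule pow_gt_self[OF p2])
    then show "m div p ^ i = 0" using \<open>m < i\<close> by simp
  qed simp
  define t where "t i = 2*m div p ^ i - 2 * (m div p ^ i)" for i
  have tle: "2 * (m div p ^ i) \<le> 2*m div p ^ i" for i
  proof -
    have q: "0 < p ^ i" using p2 by simp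
    have "2 * (m div p ^ i) * p ^ i \<le> 2 * m" using div_times_less_eq_dividend[of m "p^i"] by (simp add: mult.assoc)
    then have "(2 * (m div p ^ i) * p ^ i) div p ^ i \<le> 2 * m div p ^ i" by (rule div_le_mono)
    moreover have "(2 * (m div p ^ i) * p ^ i) div p ^ i = 2 * (m div p ^ i)"
      using q by (metis nonzero_mult_div_cancel_right not_gr0)
    ultimately show ?thesis by simp
  qed
  have tsum: "(\<Sum>i\<in>{1..2*m}. 2*m div p ^ i) = 2 * (\<Sum>i\<in>{1..2*m}. m div p ^ i) + (\<Sum>i\<in>{1..2*m}. t i)"
    unfolding t_def sum_distrib_left sum.distrib[symmetric] using tle by (intro sum.cong) auto
  have vt: "v = (\<Sum>i\<in>{1..2*m}. t i)" using veq tsum ext by simp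
  have t1: "t i \<le> 1" for i
  proof -
    have q: "0 < p ^ i" using p2 by simp
    have "2*m div p^i < 2 * (m div p^i) + 2"
    proof -
      have "m = (m div p^i) * p^i + m mod p^i" by (rule div_mult_mod_eq[symmetric])
      then have "2*m = 2*((m div p^i) * p^i + m mod p^i)" by simp
      then have "2*m = (2*(m div p^i)) * p^i + 2*(m mod p^i)" by (simp only: distrib_left mult.assoc)
      moreover have "2*(m mod p^i) < 2 * p^i" using q by simp
      ultimately have "2*m < (2*(m div p^i) + 2) * p^i" by (simp add: algebra_simps)
      then show ?thesis using q by (simp add: div_less_iff_less_mult)
    qed
    then show ?thesis unfolding t_def by simp
  qed
  have t0: "t i = 0" if "v \<le> i" for i
  proof -
    have "p ^ v \<le> p ^ i" using that p2 by (simp add: power_increasing)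
    then have "2*m < p ^ i" using big by simp
    then have "2*m div p^i = 0" by simp
    then show ?thesis unfolding t_def by simp
  qed
  have "(\<Sum>i\<in>{1..2*m}. t i) = (\<Sum>i\<in>{i\<in>{1..2*m}. i < v}. t i)"
  proof (rule sum.mono_neutral_right)
    show "\<forall>i\<in>{1..2*m} - {i\<in>{1..2*m}. i < v}. t i = 0"
    proof
      fix i assume "i \<in> {1..2*m} - {i\<in>{1..2*m}. i < v}"
      then have "v \<le> i" by auto
      then show "t i = 0" by (rule t0)
    qed
  qed auto
  also have "\<dots> \<le> (\<Sum>i\<in>{i\<in>{1..2*m}. i < v}. 1)" by (intro sum_mono t1)
  also have "\<dots> = card {i\<in>{1..2*m}. i < v}" by simp
  also have "\<dots> \<le> card {1..<v}" by (intro card_mono) auto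
  finally have X: "(\<Sum>i\<in>{1..2*m}. t i) \<le> card {1..<v}" .
  have "v \<le> v - 1" using X unfolding vt[symmetric] by simp
  moreover have "v \<noteq> 0" using big m by (cases v) auto
  ultimately show False by arith
qed

lemma binom_le_pi:
  assumes m: "0 < m"
  shows "(2*m) choose m \<le> (2*m) ^ card {p. prime p \<and> p \<le> 2*m}"
proof -
  define B where "B = (2*m) choose m"
  have B0: "B \<noteq> 0" unfolding B_def by simp
  have sub: "prime_factors B \<subseteq> {p. prime p \<and> p \<le> 2*m}"
  proof
    fix p assume pB: "p \<in> prime_factors B"
    then have pp: "prime p" and "p dvd B" by auto
    have "B dvd fact (2*m)" unfolding B_def
      using binomial_fact_lemma[of m "2*m"] by (metis dvd_triv_right le_add2 mult_2)
    then have "p dvd fact (2*m)" using \<open>p dvd B\<close> by (rule dvd_trans[rotated])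
    then show "p \<in> {p. prime p \<and> p \<le> 2*m}" using prime_dvd_fact_iff[OF pp] pp by simp
  qed
  have "B = (\<Prod>p\<in>prime_factors B. p ^ multiplicity p B)"
    using prod_prime_factors[OF B0] by simp
  also have "\<dots> \<le> (\<Prod>p\<in>prime_factors B. 2*m)"
    by (intro prod_mono) (auto simp: B_def intro: binom_mult_bound[OF _ m])
  also have "\<dots> = (2*m) ^ card (prime_factors B)" by simp
  also have "\<dots> \<le> (2*m) ^ card {p. prime p \<and> p \<le> 2*m}"
    using m by (intro power_increasing card_mono sub) auto
  finally show ?thesis unfolding B_def .
qed

lemma aux_ineq: "1 \<le> (t::nat) \<Longrightarrow> 4*t*(2^t+1) < 2^(4*t)"
proof -
  assume t: "1 \<le> t"
  show ?thesis
  proof (cases "t = 1")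
    case True then show ?thesis by simp
  next
    case False
    then have t2: "2 \<le> t" using t by simp
    have "t < 2^t" by (rule less_exp)
    then have "4*t*(2^t+1) \<le> 4*2^t*(2*2^t)" by (intro mult_mono) auto
    also have "\<dots> = 8 * 4^t" by (simp add: power_mult_distrib[symmetric])
    also have "\<dots> < 16 * 4^t" by simp
    also have "\<dots> \<le> 4^t * 4^t"
    proof -
      have "4^2 \<le> (4::nat)^t" using t2 by (intro power_increasing) auto
      then show ?thesis by simp
    qed
    also have "\<dots> = 2^(4*t)" by (simp add: power_mult power_mult_distrib[symmetric])
    finally show ?thesis .
  qed
qed

lemma prime_exists:
  fixes M t :: nat
  assumes t: "1 \<le> t" and M: "M \<le> 2^t"
  shows "\<exists>p. prime p \<and> M \<le> p \<and> p \<le> 2^(4*t)"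
proof (rule ccontr)
  assume no: "\<not> ?thesis"
  define N where "N = (2::nat)^(4*t)"
  define m where "m = (2::nat)^(4*t - 1)"
  have N2m: "N = 2*m" unfolding N_def m_def using t
    by (metis Suc_diff_1 mult_is_0 not_one_le_zero power_Suc zero_less_iff_neq_zero One_nat_def le_trans mult_le_mono2 zero_neq_numeral)
  have m0: "0 < m" unfolding m_def by simp
  have "{p. prime p \<and> p \<le> 2*m} \<subseteq> {..<M}"
    using no N2m unfolding N_def by (auto simp: not_le)
  then have "card {p. prime p \<and> p \<le> 2*m} \<le> card {..<M}"
    by (intro card_mono) auto
  then have cP: "card {p. prime p \<and> p \<le> 2*m} \<le> 2^t" using M by simp
  have "4 ^ m \<le> ((2*m) choose m) * (2*m)" by (rule nat_4pow_le[OF m0])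
  also have "\<dots> \<le> (2*m) ^ card {p. prime p \<and> p \<le> 2*m} * (2*m)"
    by (intro mult_right_mono binom_le_pi[OF m0]) auto
  also have "\<dots> \<le> (2*m) ^ (2^t) * (2*m)"
    using m0 by (intro mult_right_mono power_increasing cP) auto
  also have "\<dots> = N ^ (2^t + 1)" using N2m by simp
  also have "\<dots> = 2 ^ (4*t*(2^t+1))" unfolding N_def by (rule power_mult[symmetric])
  finally have A: "4 ^ m \<le> (2::nat) ^ (4*t*(2^t+1))" .
  have "(4::nat) ^ m = 2 ^ N" using N2m by (simp add: power_mult)
  also have "\<dots> = 2 ^ (2^(4*t))" unfolding N_def ..
  finally have "(2::nat) ^ (2^(4*t)) \<le> 2 ^ (4*t*(2^t+1))" using A by simp
  then have "2^(4*t) \<le> 4*t*(2^t+1)" by simp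
  with aux_ineq[OF t] show False by simp
qed



lemma root_bound:
  fixes p K v0 :: nat and d :: "nat \<Rightarrow> int"
  assumes pp: "prime p" and v0: "v0 < K" and dv0: "d v0 mod int p \<noteq> 0"
  shows "card {t\<in>{..<p}. (\<Sum>v<K. d v * int t ^ v) mod int p = 0} \<le> K"
proof -
  define R where "R = residue_ring (int p)"
  from pp interpret residues_prime p R
    by unfold_locales (simp_all add: R_def)
  interpret RP: UP_domain R "UP R" by (unfold_locales)
  interpret UPU: UP_pre_univ_prop R R id "UP R" by unfold_locales simp
  define mon where "mon v = monom (UP R) (d v mod int p) v" for v
  define f where "f = finsum (UP R) mon {..<K}"
  have monc: "mon \<in> {..<K} \<rightarrow> carrier (UP R)" unfolding mon_def by auto
  have fc: "f \<in> carrier (UP R)" unfolding f_def using monc by simp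
  have coeff_f: "coeff (UP R) f k = (if k < K then d k mod int p else \<zero>\<^bsub>R\<^esub>)" for k
  proof -
    have "coeff (UP R) f k = (\<Oplus>\<^bsub>R\<^esub>v\<in>{..<K}. coeff (UP R) (mon v) k)"
      unfolding f_def by (rule RP.coeff_finsum[OF _ monc]) simp
    also have "\<dots> = (\<Oplus>\<^bsub>R\<^esub>v\<in>{..<K}. (if v = k then d v mod int p else \<zero>\<^bsub>R\<^esub>))"
      unfolding mon_def by (intro finsum_cong') auto
    also have "\<dots> = (if k < K then d k mod int p else \<zero>\<^bsub>R\<^esub>)"
    proof (cases "k < K")
      case True
      have "(\<Oplus>\<^bsub>R\<^esub>v\<in>{..<K}. (if k = v then d v mod int p else \<zero>\<^bsub>R\<^esub>)) = d k mod int p"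
        by (rule finsum_singleton) (use True in auto)
      then show ?thesis using True by (simp add: eq_commute)
    next
      case False
      then have "(\<Oplus>\<^bsub>R\<^esub>v\<in>{..<K}. (if v = k then d v mod int p else \<zero>\<^bsub>R\<^esub>)) = (\<Oplus>\<^bsub>R\<^esub>v\<in>{..<K}. \<zero>\<^bsub>R\<^esub>)"
        by (intro finsum_cong') auto
      then show ?thesis using False by simp
    qed
    finally show ?thesis .
  qed
  have fnz: "f \<noteq> \<zero>\<^bsub>UP R\<^esub>"
  proof
    assume "f = \<zero>\<^bsub>UP R\<^esub>"
    then have "coeff (UP R) f v0 = \<zero>\<^bsub>R\<^esub>" by simp
    then show False using coeff_f[of v0] v0 dv0 by (simp add: zero_cong)
  qed
  have degf: "deg R f \<le> K"
    by (rule RP.deg_aboveI) (use coeff_f fc in auto)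
  have eval_f: "UnivPoly.eval R R id (int t) f = (\<Sum>v<K. d v * int t ^ v) mod int p" if t: "t < p" for t
  proof -
    have tc: "int t \<in> carrier R" using t by (simp add: res_carrier_eq)
    have hom: "UnivPoly.eval R R id (int t) \<in> ring_hom (UP R) R" by (rule UPU.eval_ring_hom[OF tc])
    interpret EH: ring_hom_ring "UP R" R "UnivPoly.eval R R id (int t)"
      by (rule ring_hom_ringI2[OF RP.UP_ring _ hom]) (rule is_ring)
    have "UnivPoly.eval R R id (int t) f = (\<Oplus>\<^bsub>R\<^esub>v\<in>{..<K}. UnivPoly.eval R R id (int t) (mon v))"
      unfolding f_def using monc by (simp add: EH.hom_finsum comp_def)
    also have "\<dots> = (\<Oplus>\<^bsub>R\<^esub>v\<in>{..<K}. (d v * int t ^ v) mod int p)"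
    proof (intro finsum_cong')
      fix v assume "v \<in> {..<K}"
      have A: "UnivPoly.eval R R id (int t) (mon v) = (d v mod int p) \<otimes>\<^bsub>R\<^esub> (int t) [^]\<^bsub>R\<^esub> v"
        unfolding mon_def by (simp add: UPU.eval_monom tc)
      have tm: "int t mod int p = int t" using t by simp
      have B: "(d v mod int p) \<otimes>\<^bsub>R\<^esub> (int t mod int p) [^]\<^bsub>R\<^esub> v = (d v * int t ^ v) mod int p"
        by (simp add: pow_cong mult_cong)
      show "UnivPoly.eval R R id (int t) (mon v) = (d v * int t ^ v) mod int p"
        using A B unfolding tm by simp
    qed auto
    also have "\<dots> = (\<Sum>v<K. d v * int t ^ v) mod int p" by (rule sum_cong) simp
    finally show ?thesis .
  qed
  have rb: "finite {a \<in> carrier R. UnivPoly.eval R R id a f = \<zero>\<^bsub>R\<^esub>} \<and>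
            card {a \<in> carrier R. UnivPoly.eval R R id a f = \<zero>\<^bsub>R\<^esub>} \<le> deg R f"
    by (rule RP.roots_bound[OF fc fnz]) simp
  have "int ` {t\<in>{..<p}. (\<Sum>v<K. d v * int t ^ v) mod int p = 0} \<subseteq> {a \<in> carrier R. UnivPoly.eval R R id a f = \<zero>\<^bsub>R\<^esub>}"
    using eval_f by (auto simp: res_carrier_eq zero_cong)
  then have "card (int ` {t\<in>{..<p}. (\<Sum>v<K. d v * int t ^ v) mod int p = 0}) \<le> card {a \<in> carrier R. UnivPoly.eval R R id a f = \<zero>\<^bsub>R\<^esub>}"
    using rb by (intro card_mono) auto
  moreover have "card (int ` {t\<in>{..<p}. (\<Sum>v<K. d v * int t ^ v) mod int p = 0}) = card {t\<in>{..<p}. (\<Sum>v<K. d v * int t ^ v) mod int p = 0}"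
    by (rule card_image) simp
  ultimately show ?thesis using rb degf by linarith
qed



fun dec :: "bool list \<Rightarrow> nat" where
  "dec [] = 0"
| "dec (b # bs) = (if b then 1 else 0) + 2 * dec bs"

fun enc :: "nat \<Rightarrow> nat \<Rightarrow> bool list" where
  "enc 0 x = []"
| "enc (Suc w) x = odd x # enc w (x div 2)"

lemma length_enc [simp]: "length (enc w x) = w"
  by (induction w arbitrary: x) auto

lemma dec_enc: "dec (enc w x) = x mod 2 ^ w"
proof (induction w arbitrary: x)
  case 0 then show ?case by simp
next
  case (Suc w)
  have "x mod 2 ^ Suc w = x mod 2 + 2 * (x div 2 mod 2 ^ w)"
    by (simp add: mod_mult2_eq mult.commute)
  then show ?case using Suc by (auto simp: odd_iff_mod_2_eq_one)
qed

lemma dec_enc_small: "x < 2 ^ w \<Longrightarrow> dec (enc w x) = x"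
  by (simp add: dec_enc)

lemma dec_less: "dec bs < 2 ^ length bs"
  by (induction bs) auto

lemma enc_dec: "enc (length bs) (dec bs) = bs"
  by (induction bs) auto

lemma inj_dec: "inj_on dec {bs. length bs = r}"
  by (rule inj_on_inverseI[where g = "enc r"]) (metis enc_dec mem_Collect_eq)

definition fld :: "bool list \<Rightarrow> nat \<Rightarrow> nat \<Rightarrow> nat" where
  "fld str off w = dec (take w (drop off str))"

lemma fld_app: "length xs = off \<Longrightarrow> x < 2 ^ w \<Longrightarrow> fld (xs @ enc w x @ ys) off w = x"
  unfolding fld_def by (simp add: dec_enc_small)

lemma card_bool_lists: "card {cs :: bool list. length cs = r} = 2 ^ r"
  using card_lists_length_eq[of "UNIV :: bool set" r] by simp

lemma finite_bool_lists: "finite {cs :: bool list. length cs = r}"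
  using finite_lists_length_eq[of "UNIV :: bool set" r] by simp

lemma card_coins: "finite V \<Longrightarrow> card (coins V r) = 2 ^ (r * card V)"
  unfolding coins_def by (simp add: card_PiE card_bool_lists power_mult)

lemma finite_coins: "finite V \<Longrightarrow> finite (coins V r)"
  unfolding coins_def by (rule finite_PiE) (auto simp: finite_bool_lists)

lemma card_coins_restrict:
  assumes V: "finite V" and v: "v \<in> V" and Rt: "finite Rt"
  shows "card {\<rho> \<in> coins V r. dec (\<rho> v) \<in> Rt} \<le> card Rt * 2 ^ (r * (card V - 1))"
proof -
  define S where "S = (\<lambda>u. if u = v then {cs :: bool list. length cs = r \<and> dec cs \<in> Rt} else {cs. length cs = r})"
  have eq: "{\<rho> \<in> coins V r. dec (\<rho> v) \<in> Rt} = PiE V S"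
    unfolding coins_def S_def using v by (auto simp: PiE_def Pi_def)
  have "card (PiE V S) = (\<Prod>u\<in>V. card (S u))" by (rule card_PiE[OF V])
  also have "\<dots> = card (S v) * (\<Prod>u\<in>V - {v}. card (S u))"
    using V v by (simp add: prod.remove)
  also have "(\<Prod>u\<in>V - {v}. card (S u)) = (\<Prod>u\<in>V - {v}. 2 ^ r)"
    by (intro prod.cong) (auto simp: S_def card_bool_lists)
  also have "\<dots> = 2 ^ (r * (card V - 1))" using V v by (simp add: power_mult card_Diff_singleton)
  also have "card (S v) \<le> card Rt"
  proof -
    have "card (S v) = card (dec ` S v)"
      by (rule card_image[symmetric]) (rule inj_on_subset[OF inj_dec[of r]], auto simp: S_def)
    also have "\<dots> \<le> card Rt" by (intro card_mono Rt) (auto simp: S_def)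
    finally show ?thesis .
  qed
  finally show ?thesis using eq by (simp add: mult_right_mono)
qed



lemma tree_sum:
  fixes S h :: "nat \<Rightarrow> int" and q :: int
  assumes V: "finite V" and par: "\<And>w. w \<in> V \<Longrightarrow> \<not> fl w \<Longrightarrow> par w \<in> V"
    and rec: "\<And>u. u \<in> V \<Longrightarrow> [S u = h u + (\<Sum>w\<in>{w\<in>V. \<not> fl w \<and> par w = u}. S w)] (mod q)"
  shows "[(\<Sum>u\<in>{u\<in>V. fl u}. S u) = (\<Sum>u\<in>V. h u)] (mod q)"
proof -
  have g: "(\<Sum>u\<in>V. (\<Sum>w\<in>{w\<in>{w\<in>V. \<not> fl w}. par w = u}. S w)) = (\<Sum>w\<in>{w\<in>V. \<not> fl w}. S w)"
    by (rule sum.group) (use V par in auto)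
  have se: "\<And>u. {w\<in>{w\<in>V. \<not> fl w}. par w = u} = {w\<in>V. \<not> fl w \<and> par w = u}" by auto
  have "[(\<Sum>u\<in>V. S u) = (\<Sum>u\<in>V. h u + (\<Sum>w\<in>{w\<in>V. \<not> fl w \<and> par w = u}. S w))] (mod q)"
    by (rule cong_sum) (use rec in auto)
  also have "(\<Sum>u\<in>V. h u + (\<Sum>w\<in>{w\<in>V. \<not> fl w \<and> par w = u}. S w)) = (\<Sum>u\<in>V. h u) + (\<Sum>w\<in>{w\<in>V. \<not> fl w}. S w)"
    using g unfolding se by (simp add: sum.distrib)
  finally have A: "[(\<Sum>u\<in>V. S u) = (\<Sum>u\<in>V. h u) + (\<Sum>w\<in>{w\<in>V. \<not> fl w}. S w)] (mod q)" .
  have B: "(\<Sum>u\<in>V. S u) = (\<Sum>u\<in>{u\<in>V. fl u}. S u) + (\<Sum>w\<in>{w\<in>V. \<not> fl w}. S w)"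
  proof -
    have "V = {u\<in>V. fl u} \<union> {w\<in>V. \<not> fl w}" by auto
    then have "(\<Sum>u\<in>V. S u) = (\<Sum>u\<in>{u\<in>V. fl u} \<union> {w\<in>V. \<not> fl w}. S u)" by simp
    also have "\<dots> = (\<Sum>u\<in>{u\<in>V. fl u}. S u) + (\<Sum>w\<in>{w\<in>V. \<not> fl w}. S w)"
      by (rule sum.union_disjoint) (use V in auto)
    finally show ?thesis .
  qed
  have "[(\<Sum>u\<in>{u\<in>V. fl u}. S u) + (\<Sum>w\<in>{w\<in>V. \<not> fl w}. S w) = (\<Sum>u\<in>V. h u) + (\<Sum>w\<in>{w\<in>V. \<not> fl w}. S w)] (mod q)"
    using A unfolding B .
  then show ?thesis by (simp only: cong_add_rcancel)
qed

lemma sum_mset_count: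
  fixes f :: "nat \<Rightarrow> int"
  assumes "set_mset M \<subseteq> {..<K}"
  shows "sum_mset (image_mset f M) = (\<Sum>v<K. int (count M v) * f v)"
  using assms
proof (induction M)
  case empty then show ?case by simp
next
  case (add x M)
  then have x: "x < K" and M: "set_mset M \<subseteq> {..<K}" by auto
  have "(\<Sum>v<K. int (count (add_mset x M) v) * f v) = (\<Sum>v<K. int (count M v) * f v + (if v = x then f v else 0))"
    by (intro sum.cong) (auto simp: algebra_simps)
  also have "\<dots> = (\<Sum>v<K. int (count M v) * f v) + f x"
    using x by (simp add: sum.distrib)
  finally show ?case using add.IH[OF M] by simp
qed

lemma sum_list_mset: "sum_list (map f xs) = sum_mset (image_mset f (mset xs))"
  by (induction xs) auto

lemma sum_image_mset_sum:
  "finite V \<Longrightarrow> (\<Sum>u\<in>V. sum_mset (image_mset f (M u))) = sum_mset (image_mset f (\<Sum>u\<in>V. M u))"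
  by (induction V rule: finite_induct) auto

lemma clog_ge: assumes "1 \<le> n" shows "n \<le> 2 ^ clog n"
proof -
  have l0: "0 \<le> log 2 (real n)" using assms by simp
  have "real n = 2 powr (log 2 (real n))" using assms by simp
  also have "\<dots> \<le> 2 powr (real_of_int \<lceil>log 2 (real n)\<rceil>)" by (intro powr_mono) auto
  also have "real_of_int \<lceil>log 2 (real n)\<rceil> = real (clog n)" unfolding clog_def using l0 by simp
  also have "2 powr real (clog n) = 2 ^ clog n" by (simp add: powr_realpow)
  finally have "real n \<le> real (2 ^ clog n)" by simp
  then show ?thesis by linarith
qed

lemma rtranclp_const:
  assumes "E\<^sup>*\<^sup>* u w" and "\<And>a b. E a b \<Longrightarrow> F a = F b"
  shows "F u = F w"
  using assms(1)
proof (induction rule: rtranclp_induct)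
  case base then show ?case by simp
next
  case (step y z)
  then show ?case using assms(2)[of y z] by simp
qed

lemma image_mset_inj_eq:
  assumes inj: "inj_on f (set_mset A \<union> set_mset B)" and eq: "image_mset f A = image_mset f B"
  shows "A = B"
proof -
  define g where "g = the_inv_into (set_mset A \<union> set_mset B) f"
  have "image_mset g (image_mset f A) = image_mset id A"
    unfolding image_mset.compositionality
  proof (rule image_mset_cong)
    fix x assume "x \<in># A"
    then have "x \<in> set_mset A \<union> set_mset B" by simp
    then show "(g \<circ> f) x = id x" unfolding g_def comp_def id_def by (rule the_inv_into_f_f[OF inj])
  qed
  moreover have "image_mset g (image_mset f B) = image_mset id B"
    unfolding image_mset.compositionality
    by (rule image_mset_cong) (auto simp: g_def the_inv_into_f_f[OF inj])
  ultimately have a: "image_mset g (image_mset f A) = A" and b: "image_mset g (image_mset f B) = B"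
    by (simp_all only: multiset.map_id0 id_apply)
  have "A = image_mset g (image_mset f A)" using a by (rule sym)
  also have "\<dots> = image_mset g (image_mset f B)" by (simp only: eq)
  also have "\<dots> = B" by (rule b)
  finally show ?thesis .
qed




definition rr :: "nat \<Rightarrow> nat \<Rightarrow> nat" where "rr c n = c * clog n + 2 * clog n + 2"
definition Kc :: "nat \<Rightarrow> nat \<Rightarrow> nat" where "Kc c n = 2 ^ (c * clog n)"
definition pr :: "nat \<Rightarrow> nat \<Rightarrow> nat" where "pr c n = (LEAST p. prime p \<and> 2 ^ rr c n \<le> p)"
definition wid :: "nat \<Rightarrow> nat \<Rightarrow> nat" where "wid \<kappa> n = \<kappa> * clog n"
definition wd :: "nat \<Rightarrow> nat" where "wd n = 2 * clog n + 1"
definition wS :: "nat \<Rightarrow> nat \<Rightarrow> nat" where "wS c n = 4 * rr c n + 5"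
definition LL :: "nat \<Rightarrow> nat \<Rightarrow> nat \<Rightarrow> nat" where
  "LL c \<kappa> n = rr c n + 1 + wid \<kappa> n + wd n + wS c n"

definition fz where "fz c n str = fld str 0 (rr c n)"
definition ffl where "ffl c n str = (fld str (rr c n) 1 = 1)"
definition fpar where "fpar c \<kappa> n str = fld str (rr c n + 1) (wid \<kappa> n)"
definition fdist where "fdist c \<kappa> n str = fld str (rr c n + 1 + wid \<kappa> n) (wd n)"
definition fS where "fS c \<kappa> n str = fld str (rr c n + 1 + wid \<kappa> n + wd n) (wS c n)"

definition mk :: "nat \<Rightarrow> nat \<Rightarrow> nat \<Rightarrow> nat \<Rightarrow> bool \<Rightarrow> nat \<Rightarrow> nat \<Rightarrow> nat \<Rightarrow> bool list" where
  "mk c \<kappa> n z fl pa d S = enc (rr c n) z @ enc 1 (if fl then 1 else 0) @ enc (wid \<kappa> n) pa @ enc (wd n) d @ enc (wS c n) S"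

definition hloc :: "bool list list \<times> bool list list \<Rightarrow> nat \<Rightarrow> int" where
  "hloc inp z = sum_list (map (\<lambda>a. int z ^ dec a) (fst inp)) - sum_list (map (\<lambda>b. int z ^ dec b) (snd inp))"

definition Dec :: "nat \<Rightarrow> nat \<Rightarrow> (bool list list \<times> bool list list) decider" where
  "Dec c \<kappa> n u inp cs str nb \<longleftrightarrow>
     (\<forall>w S'. nb w = Some S' \<longrightarrow> fz c n S' = fz c n str) \<and>
     (if ffl c n str then fz c n str = dec cs \<and> fS c \<kappa> n str mod pr c n = 0
      else (\<exists>S'. nb (fpar c \<kappa> n str) = Some S' \<and> fdist c \<kappa> n S' < fdist c \<kappa> n str)) \<and>
     [int (fS c \<kappa> n str) = hloc inp (fz c n str) +
        (\<Sum>w\<in>{w. \<exists>S'. nb w = Some S' \<and> \<not> ffl c n S' \<and> fpar c \<kappa> n S' = u}. int (fS c \<kappa> n (the (nb w))))] (mod int (pr c n))"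

lemma length_mk: "length (mk c \<kappa> n z fl pa d S) = LL c \<kappa> n"
  unfolding mk_def LL_def by simp

lemma mk_fields:
  assumes "z < 2 ^ rr c n" "pa < 2 ^ wid \<kappa> n" "d < 2 ^ wd n" "S < 2 ^ wS c n"
  shows "fz c n (mk c \<kappa> n z fl pa d S) = z"
    and "ffl c n (mk c \<kappa> n z fl pa d S) = fl"
    and "fpar c \<kappa> n (mk c \<kappa> n z fl pa d S) = pa"
    and "fdist c \<kappa> n (mk c \<kappa> n z fl pa d S) = d"
    and "fS c \<kappa> n (mk c \<kappa> n z fl pa d S) = S"
proof -
  let ?e1 = "enc (rr c n) z" and ?e2 = "enc 1 (if fl then 1 else 0)" and ?e3 = "enc (wid \<kappa> n) pa"
    and ?e4 = "enc (wd n) d" and ?e5 = "enc (wS c n) S"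
  show "fz c n (mk c \<kappa> n z fl pa d S) = z"
    unfolding fz_def mk_def using fld_app[of "[]" 0 z "rr c n" "?e2 @ ?e3 @ ?e4 @ ?e5"] assms by simp
  have "fld ((?e1) @ ?e2 @ (?e3 @ ?e4 @ ?e5)) (rr c n) 1 = (if fl then 1 else 0)"
    by (rule fld_app) auto
  then show "ffl c n (mk c \<kappa> n z fl pa d S) = fl"
    unfolding ffl_def mk_def by simp
  have "fld ((?e1 @ ?e2) @ ?e3 @ (?e4 @ ?e5)) (rr c n + 1) (wid \<kappa> n) = pa"
    by (rule fld_app) (use assms in auto)
  then show "fpar c \<kappa> n (mk c \<kappa> n z fl pa d S) = pa"
    unfolding fpar_def mk_def by simp
  have "fld ((?e1 @ ?e2 @ ?e3) @ ?e4 @ ?e5) (rr c n + 1 + wid \<kappa> n) (wd n) = d"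
    by (rule fld_app) (use assms in auto)
  then show "fdist c \<kappa> n (mk c \<kappa> n z fl pa d S) = d"
    unfolding fdist_def mk_def by simp
  have "fld ((?e1 @ ?e2 @ ?e3 @ ?e4) @ ?e5 @ []) (rr c n + 1 + wid \<kappa> n + wd n) (wS c n) = S"
    by (rule fld_app) (use assms in auto)
  then show "fS c \<kappa> n (mk c \<kappa> n z fl pa d S) = S"
    unfolding fS_def mk_def by simp
qed

lemma pr_props: "prime (pr c n) \<and> 2 ^ rr c n \<le> pr c n \<and> pr c n < 2 ^ wS c n"
proof -
  obtain p :: nat where p: "prime p" "2 ^ rr c n \<le> p" "p \<le> 2 ^ (4 * (rr c n + 1))"
    using prime_exists[of "rr c n + 1" "2 ^ rr c n"] by auto
  have P: "prime (pr c n) \<and> 2 ^ rr c n \<le> pr c n" unfolding pr_def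
    by (rule LeastI[of _ p]) (use p in auto)
  have "pr c n \<le> p" unfolding pr_def by (rule Least_le) (use p in auto)
  also have "\<dots> \<le> 2 ^ (4 * (rr c n + 1))" by (rule p(3))
  also have "\<dots> < 2 ^ wS c n" unfolding wS_def by simp
  finally show ?thesis using P by simp
qed

lemma LL_bound: "LL c \<kappa> n \<le> (5 * c + \<kappa> + 17) * (clog n + 1)"
  unfolding LL_def rr_def wid_def wd_def wS_def by (simp add: algebra_simps)

lemma rr_le_LL: "rr c n \<le> LL c \<kappa> n"
  unfolding LL_def by simp

lemma rr_big:
  assumes "1 \<le> n" shows "4 * n * n * Kc c n \<le> 2 ^ rr c n"
proof -
  have n: "n \<le> 2 ^ clog n" by (rule clog_ge[OF assms])
  have "4 * n * n * Kc c n \<le> 4 * 2 ^ clog n * 2 ^ clog n * 2 ^ (c * clog n)"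
    unfolding Kc_def using n by (intro mult_le_mono) auto
  also have "\<dots> = 2 ^ 2 * 2 ^ clog n * 2 ^ clog n * 2 ^ (c * clog n)" by simp
  also have "\<dots> = 2 ^ rr c n" unfolding rr_def by (simp only: power_add[symmetric]) (simp add: algebra_simps)
  finally show ?thesis .
qed

lemma sound_event:
  assumes wf: "wf_graph \<kappa> V E"
    and acc: "all_accept V E x (Dec c \<kappa>) P \<rho>"
  shows "\<exists>v\<in>V. [(\<Sum>u\<in>V. hloc (x u) (dec (\<rho> v))) = 0] (mod int (pr c (card V)))"
proof -
  define n where "n = card V"
  define p where "p = pr c n"
  define lab where "lab u = P \<rho> u" for u
  define nbm where "nbm u = (\<lambda>w. if w \<in> V \<and> E u w then Some (lab w) else None)" for u
  have fin: "finite V" and ne: "V \<noteq> {}" and Ein: "\<And>u w. E u w \<Longrightarrow> u \<in> V \<and> w \<in> V"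
    and Esym: "\<And>u w. E u w \<Longrightarrow> E w u" and conn: "\<And>u w. u \<in> V \<Longrightarrow> w \<in> V \<Longrightarrow> E\<^sup>*\<^sup>* u w"
    using wf unfolding wf_graph_def by blast+
  have D: "Dec c \<kappa> n u (x u) (\<rho> u) (lab u) (nbm u)" if "u \<in> V" for u
    using acc that unfolding all_accept_def n_def lab_def nbm_def by blast
  have C1: "fz c n (lab w) = fz c n (lab u)" if "E u w" for u w
  proof -
    have "u \<in> V" "w \<in> V" using Ein[OF that] by auto
    then have "nbm u w = Some (lab w)" using that unfolding nbm_def by simp
    then show ?thesis using D[OF \<open>u \<in> V\<close>] unfolding Dec_def by blast
  qed
  have C2: "\<not> ffl c n (lab u) \<Longrightarrow> fpar c \<kappa> n (lab u) \<in> V \<and> E u (fpar c \<kappa> n (lab u)) \<and>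
      fdist c \<kappa> n (lab (fpar c \<kappa> n (lab u))) < fdist c \<kappa> n (lab u)" if uV: "u \<in> V" for u
  proof -
    assume nf: "\<not> ffl c n (lab u)"
    then obtain S' where "nbm u (fpar c \<kappa> n (lab u)) = Some S'" "fdist c \<kappa> n S' < fdist c \<kappa> n (lab u)"
      using D[OF uV] unfolding Dec_def by auto
    then show ?thesis unfolding nbm_def by (auto split: if_splits)
  qed
  have C2r: "fz c n (lab u) = dec (\<rho> u) \<and> fS c \<kappa> n (lab u) mod p = 0" if "u \<in> V" "ffl c n (lab u)" for u
    using D[OF that(1)] that(2) unfolding Dec_def p_def by simp
  obtain v where v: "v \<in> V" and vmin: "\<And>u. u \<in> V \<Longrightarrow> fdist c \<kappa> n (lab v) \<le> fdist c \<kappa> n (lab u)"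
  proof -
    define m where "m = Min ((\<lambda>u. fdist c \<kappa> n (lab u)) ` V)"
    have "m \<in> (\<lambda>u. fdist c \<kappa> n (lab u)) ` V" unfolding m_def using fin ne by (intro Min_in) auto
    then obtain v where "v \<in> V" "fdist c \<kappa> n (lab v) = m" by auto
    moreover have "\<And>u. u \<in> V \<Longrightarrow> m \<le> fdist c \<kappa> n (lab u)" unfolding m_def using fin by simp
    ultimately show ?thesis using that by auto
  qed
  have vroot: "ffl c n (lab v)"
  proof (rule ccontr)
    assume "\<not> ffl c n (lab v)"
    from C2[OF v this] vmin show False by fastforce
  qed
  define z where "z = dec (\<rho> v)"
  have zall: "fz c n (lab u) = z" if "u \<in> V" for u
  proof -
    have "fz c n (lab u) = fz c n (lab v)"
      by (rule rtranclp_const[OF conn[OF that v]]) (rule C1[symmetric])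
    then show ?thesis using C2r[OF v vroot] unfolding z_def by simp
  qed
  define S where "S u = int (fS c \<kappa> n (lab u))" for u
  define fl where "fl u = ffl c n (lab u)" for u
  define par where "par u = fpar c \<kappa> n (lab u)" for u
  have chE: "E u w" if "w \<in> V" "\<not> fl w" "par w = u" for u w
    using C2[of w] that Esym unfolding fl_def par_def by auto
  have chset: "{w. \<exists>S'. nbm u w = Some S' \<and> \<not> ffl c n S' \<and> fpar c \<kappa> n S' = u} = {w\<in>V. \<not> fl w \<and> par w = u}"
    if "u \<in> V" for u
  proof (intro equalityI subsetI)
    fix w assume "w \<in> {w. \<exists>S'. nbm u w = Some S' \<and> \<not> ffl c n S' \<and> fpar c \<kappa> n S' = u}"
    then show "w \<in> {w\<in>V. \<not> fl w \<and> par w = u}" unfolding nbm_def fl_def par_def by (auto split: if_splits)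
  next
    fix w assume w: "w \<in> {w\<in>V. \<not> fl w \<and> par w = u}"
    then have "E w u" using C2[of w] unfolding fl_def par_def by auto
    then have "E u w" by (rule Esym)
    then show "w \<in> {w. \<exists>S'. nbm u w = Some S' \<and> \<not> ffl c n S' \<and> fpar c \<kappa> n S' = u}"
      using w that unfolding nbm_def fl_def par_def by auto
  qed
  have rec: "[S u = hloc (x u) z + (\<Sum>w\<in>{w\<in>V. \<not> fl w \<and> par w = u}. S w)] (mod int p)" if "u \<in> V" for u
  proof -
    have "[int (fS c \<kappa> n (lab u)) = hloc (x u) (fz c n (lab u)) +
        (\<Sum>w\<in>{w. \<exists>S'. nbm u w = Some S' \<and> \<not> ffl c n S' \<and> fpar c \<kappa> n S' = u}. int (fS c \<kappa> n (the (nbm u w))))] (mod int p)"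
      using D[OF that] unfolding Dec_def p_def by blast
    also have "(\<Sum>w\<in>{w. \<exists>S'. nbm u w = Some S' \<and> \<not> ffl c n S' \<and> fpar c \<kappa> n S' = u}. int (fS c \<kappa> n (the (nbm u w))))
        = (\<Sum>w\<in>{w\<in>V. \<not> fl w \<and> par w = u}. S w)"
      unfolding chset[OF that]
    proof (intro sum.cong refl)
      fix w assume "w \<in> {w\<in>V. \<not> fl w \<and> par w = u}"
      then have "w \<in> V" "E u w" using chE by auto
      then show "int (fS c \<kappa> n (the (nbm u w))) = S w" unfolding S_def nbm_def by simp
    qed
    finally show ?thesis using zall[OF that] unfolding S_def by simp
  qed
  have "[(\<Sum>u\<in>{u\<in>V. fl u}. S u) = (\<Sum>u\<in>V. hloc (x u) z)] (mod int p)"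
    by (rule tree_sum[OF fin _ rec]) (use C2 in \<open>auto simp: fl_def par_def\<close>)
  moreover have "[(\<Sum>u\<in>{u\<in>V. fl u}. S u) = (\<Sum>u\<in>{u\<in>V. fl u}. 0)] (mod int p)"
  proof (rule cong_sum)
    fix u assume "u \<in> {u\<in>V. fl u}"
    then have "fS c \<kappa> n (lab u) mod p = 0" using C2r unfolding fl_def by auto
    then show "[S u = 0] (mod int p)" unfolding S_def cong_def by (simp add: zmod_int[symmetric])
  qed
  ultimately have "[(\<Sum>u\<in>V. hloc (x u) z) = 0] (mod int p)" by (simp add: cong_sym_eq) (metis cong_sym cong_trans)
  then show ?thesis using v unfolding z_def p_def n_def by blast
qed

lemma hsum:
  assumes fin: "finite V"
    and len: "\<And>u s. u \<in> V \<Longrightarrow> s \<in> set (fst (x u)) \<union> set (snd (x u)) \<Longrightarrow> length s = k"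
  shows "(\<Sum>u\<in>V. hloc (x u) z) =
    (\<Sum>v<2^k. (int (count (image_mset dec (\<Sum>u\<in>V. mset (fst (x u)))) v)
                - int (count (image_mset dec (\<Sum>u\<in>V. mset (snd (x u)))) v)) * int z ^ v)"
proof -
  define f where "f = (\<lambda>a. int z ^ dec a)"
  define g where "g = (\<lambda>v. int z ^ v)"
  have fg: "f = g \<circ> dec" unfolding f_def g_def by auto
  have one: "(\<Sum>u\<in>V. sum_list (map f (sel (x u)))) =
     (\<Sum>v<2^k. int (count (image_mset dec (\<Sum>u\<in>V. mset (sel (x u)))) v) * g v)"
    if sel: "\<And>u s. u \<in> V \<Longrightarrow> s \<in> set (sel (x u)) \<Longrightarrow> length s = k" for sel :: "bool list list \<times> bool list list \<Rightarrow> bool list list"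
  proof -
    have "(\<Sum>u\<in>V. sum_list (map f (sel (x u)))) = (\<Sum>u\<in>V. sum_mset (image_mset f (mset (sel (x u)))))"
      by (simp add: sum_list_mset)
    also have "\<dots> = sum_mset (image_mset f (\<Sum>u\<in>V. mset (sel (x u))))"
      by (rule sum_image_mset_sum[OF fin])
    also have "\<dots> = sum_mset (image_mset g (image_mset dec (\<Sum>u\<in>V. mset (sel (x u)))))"
      unfolding fg by (simp add: image_mset.compositionality)
    also have "\<dots> = (\<Sum>v<2^k. int (count (image_mset dec (\<Sum>u\<in>V. mset (sel (x u)))) v) * g v)"
    proof (rule sum_mset_count)
      show "set_mset (image_mset dec (\<Sum>u\<in>V. mset (sel (x u)))) \<subseteq> {..<2^k}"
      proof
        fix v assume "v \<in> set_mset (image_mset dec (\<Sum>u\<in>V. mset (sel (x u))))"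
        then obtain a u where "u \<in> V" "a \<in> set (sel (x u))" "v = dec a"
          using fin by (auto simp: set_mset_sum)
        then show "v \<in> {..<2^k}" using dec_less[of a] sel by auto
      qed
    qed
    finally show ?thesis .
  qed
  have "(\<Sum>u\<in>V. hloc (x u) z) = (\<Sum>u\<in>V. sum_list (map f (fst (x u)))) - (\<Sum>u\<in>V. sum_list (map f (snd (x u))))"
    unfolding hloc_def f_def by (simp add: sum_subtractf)
  also have "\<dots> = (\<Sum>v<2^k. int (count (image_mset dec (\<Sum>u\<in>V. mset (fst (x u)))) v) * g v)
      - (\<Sum>v<2^k. int (count (image_mset dec (\<Sum>u\<in>V. mset (snd (x u)))) v) * g v)"
    using one[of fst] one[of snd] len by auto
  also have "\<dots> = (\<Sum>v<2^k. (int (count (image_mset dec (\<Sum>u\<in>V. mset (fst (x u)))) v)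
                - int (count (image_mset dec (\<Sum>u\<in>V. mset (snd (x u)))) v)) * int z ^ v)"
    unfolding g_def by (simp add: sum_subtractf left_diff_distrib)
  finally show ?thesis .
qed



lemma mod_nonzero_small: "(a::int) \<noteq> 0 \<Longrightarrow> \<bar>a\<bar> < q \<Longrightarrow> a mod q \<noteq> 0"
proof
  assume a: "a \<noteq> 0" "\<bar>a\<bar> < q" "a mod q = 0"
  then have "q dvd a" by auto
  then have "q dvd \<bar>a\<bar>" by simp
  then have "q \<le> \<bar>a\<bar>" using a(1) by (intro zdvd_imp_le) auto
  then show False using a(2) by simp
qed

lemma sound:
  assumes inD: "(V, E, x) \<in> seteq_dom c \<kappa>" and notL: "(V, E, x) \<notin> seteq_lang c \<kappa>"
  shows "acc_prob V E x (rr c) (Dec c \<kappa>) P < 1/3"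
proof -
  define n where "n = card V"
  define r where "r = rr c n"
  define p where "p = pr c n"
  define k where "k = c * clog n"
  define K where "K = (2::nat) ^ k"
  have wf: "wf_graph \<kappa> V E" using inD unfolding seteq_dom_def by simp
  then have fin: "finite V" and ne: "V \<noteq> {}" unfolding wf_graph_def by auto
  have n1: "1 \<le> n" unfolding n_def using fin ne by (simp add: Suc_leI card_gt_0_iff)
  obtain l where l: "l \<le> n" and lens: "\<And>u. u \<in> V \<Longrightarrow> length (fst (x u)) = l \<and> length (snd (x u)) = l"
    and slen: "\<And>u s. u \<in> V \<Longrightarrow> s \<in> set (fst (x u)) \<union> set (snd (x u)) \<Longrightarrow> length s = k"
    using inD unfolding seteq_dom_def n_def k_def by auto
  define MA where "MA = (\<Sum>u\<in>V. mset (fst (x u)))"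
  define MB where "MB = (\<Sum>u\<in>V. mset (snd (x u)))"
  define dd where "dd v = int (count (image_mset dec MA) v) - int (count (image_mset dec MB) v)" for v
  have neq: "MA \<noteq> MB" using notL inD unfolding seteq_lang_def MA_def MB_def by auto
  have pp: "prime p" and rp: "2 ^ r \<le> p" using pr_props[of c n] unfolding p_def r_def by auto
  have big: "4 * n * n * K \<le> 2 ^ r" using rr_big[OF n1, of c] unfolding K_def k_def Kc_def r_def .
  have "image_mset dec MA \<noteq> image_mset dec MB"
  proof
    assume eq: "image_mset dec MA = image_mset dec MB"
    have "set_mset MA \<union> set_mset MB \<subseteq> {bs. length bs = k}"
      using slen fin unfolding MA_def MB_def by (auto simp: set_mset_sum)
    then have "inj_on dec (set_mset MA \<union> set_mset MB)" by (rule inj_on_subset[OF inj_dec])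
    then have "MA = MB" using eq by (rule image_mset_inj_eq)
    then show False using neq by simp
  qed
  then obtain v0 where cne: "count (image_mset dec MA) v0 \<noteq> count (image_mset dec MB) v0"
    by (meson multiset_eqI)
  have v0K: "v0 < K"
  proof -
    have "v0 \<in># image_mset dec MA \<or> v0 \<in># image_mset dec MB" using cne by (metis count_eq_zero_iff)
    then obtain a u where "u \<in> V" "a \<in> set (fst (x u)) \<union> set (snd (x u))" "v0 = dec a"
      using fin unfolding MA_def MB_def by (auto simp: set_mset_sum)
    then show ?thesis using dec_less[of a] slen unfolding K_def by auto
  qed
  have sizeMA: "size MA = n * l"
  proof -
    have "size MA = (\<Sum>u\<in>V. l)" unfolding MA_def size_multiset_sum
      by (intro sum.cong) (simp_all add: lens)
    then show ?thesis unfolding n_def by simp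
  qed
  have sizeMB: "size MB = n * l"
  proof -
    have "size MB = (\<Sum>u\<in>V. l)" unfolding MB_def size_multiset_sum
      by (intro sum.cong) (simp_all add: lens)
    then show ?thesis unfolding n_def by simp
  qed
  have "count (image_mset dec MA) v0 \<le> n * l" using sizeMA
    by (metis count_le_size size_image_mset)
  moreover have "count (image_mset dec MB) v0 \<le> n * l" using sizeMB
    by (metis count_le_size size_image_mset)
  moreover have "n * l < p"
  proof -
    have "n * l \<le> n * n" using l by simp
    also have "\<dots> < 4 * n * n * K"
    proof -
      have K1: "1 \<le> K" unfolding K_def by simp
      have "n * n * 1 < n * n * (4 * K)" using n1 K1 by (intro mult_strict_left_mono) auto
      then show ?thesis by (simp add: algebra_simps)
    qed
    finally show ?thesis using big rp by linarith
  qed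
  ultimately have "\<bar>dd v0\<bar> < int p" unfolding dd_def by linarith
  moreover have "dd v0 \<noteq> 0" using cne unfolding dd_def by simp
  ultimately have dd0: "dd v0 mod int p \<noteq> 0" by (intro mod_nonzero_small)
  define Rt where "Rt = {t\<in>{..<p}. (\<Sum>v<K. dd v * int t ^ v) mod int p = 0}"
  have cRt: "card Rt \<le> K" unfolding Rt_def by (rule root_bound[where d = dd, OF pp v0K dd0])
  have fRt: "finite Rt" unfolding Rt_def by simp
  have sub: "{\<rho> \<in> coins V r. all_accept V E x (Dec c \<kappa>) P \<rho>} \<subseteq> (\<Union>v\<in>V. {\<rho> \<in> coins V r. dec (\<rho> v) \<in> Rt})"
  proof
    fix \<rho> assume "\<rho> \<in> {\<rho> \<in> coins V r. all_accept V E x (Dec c \<kappa>) P \<rho>}"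
    then have rc: "\<rho> \<in> coins V r" and acc: "all_accept V E x (Dec c \<kappa>) P \<rho>" by auto
    obtain v where v: "v \<in> V" and cg: "[(\<Sum>u\<in>V. hloc (x u) (dec (\<rho> v))) = 0] (mod int p)"
      using sound_event[OF wf acc] unfolding p_def n_def by blast
    have "(\<Sum>u\<in>V. hloc (x u) (dec (\<rho> v))) = (\<Sum>v'<K. dd v' * int (dec (\<rho> v)) ^ v')"
      unfolding K_def dd_def MA_def MB_def by (rule hsum[OF fin slen])
    with cg have "(\<Sum>v'<K. dd v' * int (dec (\<rho> v)) ^ v') mod int p = 0" by (simp add: cong_def)
    moreover have "dec (\<rho> v) < p"
    proof -
      have "length (\<rho> v) = r" using rc v unfolding coins_def by auto
      then show ?thesis using dec_less[of "\<rho> v"] rp by simp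
    qed
    ultimately show "\<rho> \<in> (\<Union>v\<in>V. {\<rho> \<in> coins V r. dec (\<rho> v) \<in> Rt})" using v rc unfolding Rt_def by auto
  qed
  have "card {\<rho> \<in> coins V r. all_accept V E x (Dec c \<kappa>) P \<rho>} \<le> card (\<Union>v\<in>V. {\<rho> \<in> coins V r. dec (\<rho> v) \<in> Rt})"
    by (rule card_mono[OF _ sub]) (use fin finite_coins in auto)
  also have "\<dots> \<le> (\<Sum>v\<in>V. card {\<rho> \<in> coins V r. dec (\<rho> v) \<in> Rt})" by (rule card_UN_le[OF fin])
  also have "\<dots> \<le> (\<Sum>v\<in>V. K * 2 ^ (r * (n - 1)))"
  proof (rule sum_mono)
    fix v assume "v \<in> V"
    have "card {\<rho> \<in> coins V r. dec (\<rho> v) \<in> Rt} \<le> card Rt * 2 ^ (r * (card V - 1))"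
      by (rule card_coins_restrict[OF fin \<open>v \<in> V\<close> fRt])
    also have "\<dots> \<le> K * 2 ^ (r * (n - 1))" unfolding n_def using cRt by simp
    finally show "card {\<rho> \<in> coins V r. dec (\<rho> v) \<in> Rt} \<le> K * 2 ^ (r * (n - 1))" .
  qed
  also have "\<dots> = n * K * 2 ^ (r * (n - 1))" unfolding n_def by simp
  finally have num: "card {\<rho> \<in> coins V r. all_accept V E x (Dec c \<kappa>) P \<rho>} \<le> n * K * 2 ^ (r * (n - 1))" .
  have den: "card (coins V r) = 2 ^ r * 2 ^ (r * (n - 1))"
  proof -
    have "r * n = r + r * (n - 1)" using n1 by (cases n) auto
    then show ?thesis using card_coins[OF fin, of r] unfolding n_def by (simp add: power_add)
  qed
  have "real (card {\<rho> \<in> coins V r. all_accept V E x (Dec c \<kappa>) P \<rho>}) * 3 < real (card (coins V r))"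
  proof -
    have "card {\<rho> \<in> coins V r. all_accept V E x (Dec c \<kappa>) P \<rho>} * 3 \<le> n * K * 2 ^ (r * (n - 1)) * 3"
      using num by simp
    also have "\<dots> < 4 * n * n * K * 2 ^ (r * (n - 1))"
    proof -
      have "n * K * 3 < 4 * n * n * K" using n1 unfolding K_def
        by (simp add: mult_strict_right_mono)
      then show ?thesis by simp
    qed
    also have "\<dots> \<le> 2 ^ r * 2 ^ (r * (n - 1))" using big by simp
    finally show ?thesis unfolding den by (simp only: of_nat_less_iff of_nat_mult[symmetric] of_nat_numeral)
  qed
  moreover have "0 < real (card (coins V r))" using den by simp
  ultimately show ?thesis unfolding acc_prob_def n_def[symmetric] r_def[symmetric]
    by (simp add: field_simps)
qed



lemma fix_iter:
  fixes h :: "nat \<Rightarrow> int" and ch :: "nat \<Rightarrow> nat set" and dist :: "nat \<Rightarrow> nat"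
  assumes ch: "\<And>u w. w \<in> ch u \<Longrightarrow> dist u < dist w \<and> dist w \<le> N"
  defines "F \<equiv> (\<lambda>g u. h u + sum g (ch u))"
  shows "N \<le> dist u + k \<Longrightarrow> (F^^(Suc k)) gz u = (F^^(Suc (Suc k))) gz u"
proof (induction k arbitrary: u)
  case 0
  have "ch u = {}" using ch 0 by fastforce
  then show ?case unfolding F_def by simp
next
  case (Suc k)
  have "(\<Sum>w\<in>ch u. (F^^(Suc k)) gz w) = (\<Sum>w\<in>ch u. (F^^(Suc (Suc k))) gz w)"
  proof (intro sum.cong refl)
    fix w assume "w \<in> ch u"
    then have "N \<le> dist w + k" using ch[of w u] Suc.prems by linarith
    then show "(F^^(Suc k)) gz w = (F^^(Suc (Suc k))) gz w" by (rule Suc.IH)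
  qed
  then show ?case unfolding F_def by simp
qed

lemma fix_iter':
  fixes h :: "nat \<Rightarrow> int" and ch :: "nat \<Rightarrow> nat set" and dist :: "nat \<Rightarrow> nat"
  assumes ch: "\<And>u w. w \<in> ch u \<Longrightarrow> dist u < dist w \<and> dist w \<le> N"
  defines "S \<equiv> ((\<lambda>g u. h u + sum g (ch u))^^(Suc N)) (\<lambda>_. 0)"
  shows "S u = h u + sum S (ch u)"
proof -
  have "S u = (((\<lambda>g u. h u + sum g (ch u))^^(Suc (Suc N))) (\<lambda>_. 0)) u"
    unfolding S_def
    by (rule fix_iter[where h=h and ch=ch and dist=dist and N=N and k=N and u=u and gz="\<lambda>_. 0"]) (use ch in auto)
  then show ?thesis unfolding S_def by simp
qed

lemma bfs:
  assumes wf: "wf_graph \<kappa> V E" and v0: "v0 \<in> V"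
  shows "\<exists>dist par. (\<forall>u\<in>V. dist u \<le> card V * card V) \<and>
     (\<forall>u\<in>V. u \<noteq> v0 \<longrightarrow> par u \<in> V \<and> E u (par u) \<and> dist (par u) < dist u)"
proof -
  have fin: "finite V" and Ein: "\<And>u w. E u w \<Longrightarrow> u \<in> V \<and> w \<in> V"
    and conn: "\<And>u w. u \<in> V \<Longrightarrow> w \<in> V \<Longrightarrow> E\<^sup>*\<^sup>* u w"
    using wf unfolding wf_graph_def by blast+
  define R where "R = {(a, b). E a b}"
  have RV: "R \<subseteq> V \<times> V" unfolding R_def using Ein by auto
  have finR: "finite R" using RV fin by (meson finite_SigmaI finite_subset)
  have cR: "card R \<le> card V * card V"
    using card_mono[OF finite_SigmaI[OF fin fin] RV] by (simp add: card_cartesian_product)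
  have Eeq: "E = (\<lambda>a b. (a, b) \<in> R)" unfolding R_def by auto
  define dist where "dist u = (LEAST k. (u, v0) \<in> R ^^ k)" for u
  have reach: "\<exists>k\<le>card R. (u, v0) \<in> R ^^ k" if "u \<in> V" for u
  proof -
    have "E\<^sup>*\<^sup>* u v0" by (rule conn[OF that v0])
    then have "(u, v0) \<in> R\<^sup>*" unfolding Eeq by (simp add: rtranclp_rtrancl_eq)
    then show ?thesis unfolding rtrancl_finite_eq_relpow[OF finR] by auto
  qed
  have dle: "dist u \<le> card R" and din: "(u, v0) \<in> R ^^ dist u" if uV: "u \<in> V" for u
  proof -
    obtain k where k: "k \<le> card R" "(u, v0) \<in> R ^^ k" using reach[OF uV] by blast
    show "dist u \<le> card R" unfolding dist_def using Least_le[of "\<lambda>k. (u, v0) \<in> R ^^ k" k] k by simp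
    show "(u, v0) \<in> R ^^ dist u" unfolding dist_def by (rule LeastI[of _ k]) (rule k(2))
  qed
  have step: "\<exists>y. y \<in> V \<and> E u y \<and> dist y < dist u" if "u \<in> V" "u \<noteq> v0" for u
  proof -
    have "dist u \<noteq> 0"
    proof
      assume "dist u = 0"
      then have "(u, v0) \<in> R ^^ 0" using din[OF that(1)] by simp
      then show False using that(2) by simp
    qed
    then obtain j where j: "dist u = Suc j" by (cases "dist u") auto
    then have "(u, v0) \<in> R ^^ Suc j" using din[OF that(1)] by simp
    then obtain y where y: "(u, y) \<in> R" "(y, v0) \<in> R ^^ j" by (blast dest: relpow_Suc_D2)
    have "E u y" using y(1) unfolding R_def by simp
    then have yV: "y \<in> V" using Ein by blast
    have "dist y \<le> j" unfolding dist_def by (rule Least_le) (rule y(2))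
    then show ?thesis using yV \<open>E u y\<close> j by auto
  qed
  define par where "par u = (SOME y. y \<in> V \<and> E u y \<and> dist y < dist u)" for u
  have "\<forall>u\<in>V. u \<noteq> v0 \<longrightarrow> par u \<in> V \<and> E u (par u) \<and> dist (par u) < dist u"
    unfolding par_def using step by (metis (mono_tags, lifting) someI_ex)
  moreover have "\<forall>u\<in>V. dist u \<le> card V * card V" using dle cR le_trans by blast
  ultimately show ?thesis by blast
qed

lemma pow_clog: "1 \<le> n \<Longrightarrow> n ^ \<kappa> \<le> 2 ^ wid \<kappa> n"
proof -
  assume n: "1 \<le> n"
  have "n ^ \<kappa> \<le> (2 ^ clog n) ^ \<kappa>" by (rule power_mono[OF clog_ge[OF n]]) simp
  also have "\<dots> = 2 ^ wid \<kappa> n" unfolding wid_def by (simp add: power_mult[symmetric] mult.commute)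
  finally show ?thesis .
qed

lemma nn_wd: "1 \<le> n \<Longrightarrow> n * n < 2 ^ wd n"
proof -
  assume n: "1 \<le> n"
  have "n * n \<le> 2 ^ clog n * 2 ^ clog n" using clog_ge[OF n] by (intro mult_le_mono) auto
  also have "\<dots> < 2 ^ wd n" unfolding wd_def by (simp add: power_add[symmetric] mult_2)
  finally show ?thesis .
qed

lemma complete:
  assumes inL: "(V, E, x) \<in> seteq_lang c \<kappa>"
  shows "\<exists>P. prover_size_ok V (rr c) (LL c \<kappa>) P \<and> acc_prob V E x (rr c) (Dec c \<kappa>) P > 2/3"
proof -
  define n where "n = card V"
  define r where "r = rr c n"
  define p where "p = pr c n"
  define k where "k = c * clog n"
  have inD: "(V, E, x) \<in> seteq_dom c \<kappa>" and meq: "(\<Sum>u\<in>V. mset (fst (x u))) = (\<Sum>u\<in>V. mset (snd (x u)))"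
    using inL unfolding seteq_lang_def by auto
  have wf: "wf_graph \<kappa> V E" using inD unfolding seteq_dom_def by simp
  then have fin: "finite V" and ne: "V \<noteq> {}" and Ein: "\<And>u w. E u w \<Longrightarrow> u \<in> V \<and> w \<in> V"
    and Esym: "\<And>u w. E u w \<Longrightarrow> E w u" and idb: "V \<subseteq> {..< n ^ \<kappa>}"
    unfolding wf_graph_def n_def by blast+
  have n1: "1 \<le> n" unfolding n_def using fin ne by (simp add: Suc_leI card_gt_0_iff)
  obtain l where slen: "\<And>u s. u \<in> V \<Longrightarrow> s \<in> set (fst (x u)) \<union> set (snd (x u)) \<Longrightarrow> length s = k"
    using inD unfolding seteq_dom_def n_def k_def by auto
  define v0 where "v0 = (SOME v. v \<in> V)"
  have v0: "v0 \<in> V" unfolding v0_def using ne by (simp add: some_in_eq)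
  obtain dist par where dle: "\<And>u. u \<in> V \<Longrightarrow> dist u \<le> n * n"
    and parp: "\<And>u. u \<in> V \<Longrightarrow> u \<noteq> v0 \<Longrightarrow> par u \<in> V \<and> E u (par u) \<and> dist (par u) < dist u"
    using bfs[OF wf v0] unfolding n_def by blast
  define N where "N = n * n"
  define ch where "ch u = {w\<in>V. w \<noteq> v0 \<and> par w = u}" for u
  have chp: "dist u < dist w \<and> dist w \<le> N" if "w \<in> ch u" for u w
    using that parp dle unfolding ch_def N_def by auto
  define Sf where "Sf z = ((\<lambda>g u. hloc (x u) z + sum g (ch u))^^(Suc N)) (\<lambda>_. 0)" for z
  have Srec: "Sf z u = hloc (x u) z + sum (Sf z) (ch u)" for z u
    unfolding Sf_def by (rule fix_iter'[OF chp])
  define P where "P \<rho> u = mk c \<kappa> n (dec (\<rho> v0)) (u = v0) (if u = v0 then 0 else par u) (dist u)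
      (nat (Sf (dec (\<rho> v0)) u mod int p))" for \<rho> u
  have size: "prover_size_ok V (rr c) (LL c \<kappa>) P"
    unfolding prover_size_ok_def P_def n_def by (simp add: length_mk)
  have pp: "prime p" and rp: "2 ^ r \<le> p" and pw: "p < 2 ^ wS c n" using pr_props[of c n] unfolding p_def r_def by auto
  have p0: "0 < int p" using pp prime_gt_0_nat by simp
  have accall: "all_accept V E x (Dec c \<kappa>) P \<rho>" if rho: "\<rho> \<in> coins V r" for \<rho>
  proof -
    define z where "z = dec (\<rho> v0)"
    define S where "S = Sf z"
    have zr: "z < 2 ^ rr c n"
    proof -
      have "length (\<rho> v0) = r" using rho v0 unfolding coins_def by auto
      then show ?thesis using dec_less[of "\<rho> v0"] unfolding z_def r_def by simp
    qed
    have Slt: "nat (S u mod int p) < 2 ^ wS c n" for u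
    proof -
      have "nat (S u mod int p) < p" using p0 by (simp add: nat_less_iff)
      then show ?thesis by (rule less_trans[OF _ pw])
    qed
    have lab: "fz c n (P \<rho> u) = z \<and> ffl c n (P \<rho> u) = (u = v0) \<and>
        (u \<noteq> v0 \<longrightarrow> fpar c \<kappa> n (P \<rho> u) = par u) \<and> fdist c \<kappa> n (P \<rho> u) = dist u \<and>
        fS c \<kappa> n (P \<rho> u) = nat (S u mod int p)" if uV: "u \<in> V" for u
    proof -
      have pa: "(if u = v0 then 0 else par u) < 2 ^ wid \<kappa> n"
      proof (cases "u = v0")
        case False
        then have "par u \<in> V" using parp uV by blast
        then have "par u < n ^ \<kappa>" using idb by auto
        then show ?thesis using pow_clog[OF n1, of \<kappa>] False by simp
      qed simp
      have d: "dist u < 2 ^ wd n" using dle[OF uV] nn_wd[OF n1] by linarith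
      note mf = mk_fields[OF zr pa d Slt, of "u = v0"]
      show ?thesis unfolding P_def z_def[symmetric] S_def[symmetric] using mf by auto
    qed
    have Sr: "S u = hloc (x u) z + sum S (ch u)" for u unfolding S_def by (rule Srec)
    have root0: "[S v0 = 0] (mod int p)"
    proof -
      have "[(\<Sum>u\<in>{u\<in>V. u = v0}. S u) = (\<Sum>u\<in>V. hloc (x u) z)] (mod int p)"
      proof (rule tree_sum[OF fin])
        show "\<And>w. w \<in> V \<Longrightarrow> \<not> w = v0 \<Longrightarrow> par w \<in> V" using parp by blast
        show "[S u = hloc (x u) z + (\<Sum>w\<in>{w\<in>V. \<not> w = v0 \<and> par w = u}. S w)] (mod int p)" for u
          using Sr[of u] unfolding ch_def by simp
      qed
      moreover have "{u\<in>V. u = v0} = {v0}" using v0 by auto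
      moreover have "(\<Sum>u\<in>V. hloc (x u) z) = 0"
        using hsum[OF fin slen, where z = z] meq by simp
      ultimately show ?thesis by simp
    qed
    show ?thesis unfolding all_accept_def
    proof
      fix u assume uV: "u \<in> V"
      define nb where "nb = (\<lambda>w. if w \<in> V \<and> E u w then Some (P \<rho> w) else None)"
      have c1: "\<forall>w S'. nb w = Some S' \<longrightarrow> fz c n S' = fz c n (P \<rho> u)"
        using lab uV unfolding nb_def by (auto split: if_splits)
      have c2: "if ffl c n (P \<rho> u) then fz c n (P \<rho> u) = dec (\<rho> u) \<and> fS c \<kappa> n (P \<rho> u) mod pr c n = 0
          else (\<exists>S'. nb (fpar c \<kappa> n (P \<rho> u)) = Some S' \<and> fdist c \<kappa> n S' < fdist c \<kappa> n (P \<rho> u))"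
      proof (cases "u = v0")
        case True
        have "S v0 mod int p = 0" using root0 by (simp add: cong_def)
        then show ?thesis using lab[OF uV] True unfolding z_def p_def by simp
      next
        case False
        have pu: "par u \<in> V" "E u (par u)" "dist (par u) < dist u" using parp[OF uV False] by auto
        then have "nb (par u) = Some (P \<rho> (par u))" unfolding nb_def by simp
        then show ?thesis using lab[OF uV] lab[OF pu(1)] False pu(3) by auto
      qed
      have chs: "{w. \<exists>S'. nb w = Some S' \<and> \<not> ffl c n S' \<and> fpar c \<kappa> n S' = u} = ch u"
      proof (intro equalityI subsetI)
        fix w assume "w \<in> {w. \<exists>S'. nb w = Some S' \<and> \<not> ffl c n S' \<and> fpar c \<kappa> n S' = u}"
        then have wV: "w \<in> V" and "\<not> ffl c n (P \<rho> w)" "fpar c \<kappa> n (P \<rho> w) = u"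
          unfolding nb_def by (auto split: if_splits)
        then show "w \<in> ch u" using lab[OF wV] unfolding ch_def by auto
      next
        fix w assume "w \<in> ch u"
        then have wV: "w \<in> V" and wn: "w \<noteq> v0" and pw: "par w = u" unfolding ch_def by auto
        have "E w u" using parp[OF wV wn] pw by auto
        then have "E u w" by (rule Esym)
        then show "w \<in> {w. \<exists>S'. nb w = Some S' \<and> \<not> ffl c n S' \<and> fpar c \<kappa> n S' = u}"
          using wV wn pw lab[OF wV] unfolding nb_def by auto
      qed
      have c3: "[int (fS c \<kappa> n (P \<rho> u)) = hloc (x u) (fz c n (P \<rho> u)) +
        (\<Sum>w\<in>{w. \<exists>S'. nb w = Some S' \<and> \<not> ffl c n S' \<and> fpar c \<kappa> n S' = u}. int (fS c \<kappa> n (the (nb w))))] (mod int (pr c n))"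
      proof -
        have sumeq: "(\<Sum>w\<in>{w. \<exists>S'. nb w = Some S' \<and> \<not> ffl c n S' \<and> fpar c \<kappa> n S' = u}. int (fS c \<kappa> n (the (nb w))))
            = (\<Sum>w\<in>ch u. S w mod int p)"
          unfolding chs
        proof (intro sum.cong refl)
          fix w assume "w \<in> ch u"
          then have wV: "w \<in> V" and wn: "w \<noteq> v0" and pw: "par w = u" unfolding ch_def by auto
          have "E w u" using parp[OF wV wn] pw by auto
          then have "E u w" by (rule Esym)
          then have "nb w = Some (P \<rho> w)" unfolding nb_def using wV by simp
          then show "int (fS c \<kappa> n (the (nb w))) = S w mod int p" using lab[OF wV] p0 by simp
        qed
        have a: "[S u mod int p = S u] (mod int p)" by (simp add: cong_def)
        have b: "[hloc (x u) z + sum S (ch u) = hloc (x u) z + (\<Sum>w\<in>ch u. S w mod int p)] (mod int p)"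
          by (intro cong_add cong_refl cong_sum) (simp add: cong_def)
        have "[S u mod int p = hloc (x u) z + (\<Sum>w\<in>ch u. S w mod int p)] (mod int p)"
          using cong_trans[OF a b[folded Sr]] .
        then have "[S u mod int p = hloc (x u) z + (\<Sum>w\<in>ch u. S w mod int p)] (mod int p)" .
        then show ?thesis unfolding sumeq using lab[OF uV] p0 unfolding p_def by simp
      qed
      show "Dec c \<kappa> (card V) u (x u) (\<rho> u) (P \<rho> u) (\<lambda>w. if w \<in> V \<and> E u w then Some (P \<rho> w) else None)"
        unfolding Dec_def n_def[symmetric] nb_def[symmetric] using c1 c2 c3 by blast
    qed
  qed
  have "{\<rho> \<in> coins V r. all_accept V E x (Dec c \<kappa>) P \<rho>} = coins V r" using accall by auto
  moreover have "0 < card (coins V r)" using card_coins[OF fin, of r] by simp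
  ultimately have "acc_prob V E x (rr c) (Dec c \<kappa>) P = 1"
    unfolding acc_prob_def n_def[symmetric] r_def[symmetric] by simp
  then show ?thesis using size by auto
qed


theorem mainTheorem5:
  fixes c \<kappa> :: nat
  shows "\<exists>L. in_dAM (seteq_dom c \<kappa>) (seteq_lang c \<kappa>) L \<and>
             (\<exists>C. \<forall>n. L n \<le> C * (clog n + 1))"
proof -
  have "in_dAM (seteq_dom c \<kappa>) (seteq_lang c \<kappa>) (LL c \<kappa>)"
    unfolding in_dAM_def
  proof (intro exI[of _ "rr c"] exI[of _ "Dec c \<kappa>"] conjI)
    show "\<forall>n. rr c n \<le> LL c \<kappa> n" using rr_le_LL by blast
    show "\<forall>(V, E, x)\<in>seteq_lang c \<kappa>. \<exists>P. prover_size_ok V (rr c) (LL c \<kappa>) P \<and> 2 / 3 < acc_prob V E x (rr c) (Dec c \<kappa>) P"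
      using complete by blast
    show "\<forall>(V, E, x)\<in>seteq_dom c \<kappa> - seteq_lang c \<kappa>. \<forall>P. prover_size_ok V (rr c) (LL c \<kappa>) P \<longrightarrow> acc_prob V E x (rr c) (Dec c \<kappa>) P < 1 / 3"
      using sound by blast
  qed
  moreover have "\<forall>n. LL c \<kappa> n \<le> (5 * c + \<kappa> + 17) * (clog n + 1)" using LL_bound by blast
  ultimately show ?thesis by blast
qed

end
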